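(* Let $\theta\in(0,1)$ and $p=\frac1{1-\theta}$. In the Boosted HiPPA setting of the context, let $\{x^k\}$ and $\{\bar x^k\}$ be generated by the algorithm, let $\bar y^k\in\operatorname{prox}^p_{\gamma\varphi}(x^k)$ satisfy $\|\bar x^k-\bar y^k\|=\operatorname{dist}(\bar x^k,\operatorname{prox}^p_{\gamma\varphi}(x^k))$, and let $\Omega$ be the set of cluster points of $\{x^k\}$. Suppose $\varphi$ satisfies the KL property with exponent $\theta$ on $\Omega$, $\{x^k\}$ is bounded, there is $D\ge0$ with $\|d^k\|\le D\|R^{\varepsilon_k}_\gamma(x^k)\|$ for all $k$, and the sequences $\{\varepsilon_k\},\{\delta_k\}$ satisfy: there are $\omega\in(0,1)$ and a non-increasing sequence of positive scalars $\{\beta_k\}$ with $\sum_k\beta_k<\infty$ such that for all $k$, $$\varepsilon_k^{1/p},\ \delta_k\le\min\Big\{\beta_k,\ \omega\|x^k-\bar x^k\|,\ \min_{0\le i\le j\le k}\beta_j\|x^i-\bar x^i\|\Big\},$$ together with $\sum_{k=0}^\infty\sum_{j\ge k}\delta_j<\infty$ and $\sum_{k=0}^\infty\sum_{j\ge k}\varepsilon_j^{1/p}<\infty$. Then $\{x^k\}$, $\{\bar x^k\}$, $\{\bar y^k\}$ converge globally and linearly to a proximal fixed point (a point $\hat x$ with $\hat x\in\operatorname{prox}^p_{\gamma\varphi}(\hat x)$).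
   Context: Standing setting. $\varphi:\mathbb{R}^n\to\mathbb{R}\cup\{+\infty\}$ is proper, lsc and bounded from below. For $\gamma>0$: $\operatorname{prox}^p_{\gamma\varphi}(x):=\operatorname{argmin}_y\big(\varphi(y)+\frac1{p\gamma}\|x-y\|^p\big)$, $\varphi^p_\gamma(x):=\inf_y\big(\varphi(y)+\frac1{p\gamma}\|x-y\|^p\big)$. $\{\varepsilon_k\},\{\delta_k\}$ are non-increasing positive sequences with $\sum_k\varepsilon_k<\infty$, $\delta_k\downarrow0$. Prox approximation: for each index $j$ and point $x$ needed, a point $P_j(x)$ is available with $\operatorname{dist}(P_j(x),\operatorname{prox}^p_{\gamma\varphi}(x))<\delta_j$ and $\varphi(P_j(x))+\frac1{p\gamma}\|x-P_j(x)\|^p<\varphi^p_\gamma(x)+\varepsilon_j$. Define $\varphi^{p,\varepsilon_j}_\gamma(x):=\varphi(P_j(x))+\frac1{p\gamma}\|x-P_j(x)\|^p$, $R^{\varepsilon_j}_\gamma(x):=x-P_j(x)$. Boosted HiPPA: choose $x^0$, $\gamma>0$, $\sigma\in(0,\frac1{p\gamma})$, $\vartheta\in(0,1)$. At iteration $k$: $\bar x^k:=P_k(x^k)$; choose a direction $d^k$; for $m=0,1,\dots$ set $\alpha_k=\vartheta^m$, $\hat x^{k+1}=(1-\alpha_k)\bar x^k+\alpha_k(x^k+d^k)$, until $\varphi^{p,\varepsilon_{k+1}}_\gamma(\hat x^{k+1})\le\varphi^{p,\varepsilon_k}_\gamma(x^k)-\sigma\|R^{\varepsilon_k}_\gamma(x^k)\|^p+\varepsilon_k+\varepsilon_{k+1}$;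 set $x^{k+1}=\hat x^{k+1}$. $\partial$ is the Mordukhovich (limiting) subdifferential. $h$ satisfies the KL property with exponent $\theta$ at $\bar x\in\operatorname{Dom}\partial h$ if there are $r>0$, $\eta\in(0,\infty]$, $c>0$ such that, with $\phi(t)=ct^{1-\theta}$, $\phi'(|h(x)-h(\bar x)|)\operatorname{dist}(0,\partial h(x))\ge1$ for all $x\in\mathbb{B}(\bar x;r)\cap\operatorname{Dom}\partial h$ with $0<|h(x)-h(\bar x)|<\eta$. *)

theory Defs
  imports "HOL-Analysis.Analysis" "HOL-Library.Extended_Real"
begin

definition proper_fun :: "('a \<Rightarrow> ereal) \<Rightarrow> bool" where
  "proper_fun f \<longleftrightarrow> (\<forall>x. f x \<noteq> -\<infinity>) \<and> (\<exists>x. f x \<noteq> \<infinity>)"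

definition lsc_fun :: "('a::metric_space \<Rightarrow> ereal) \<Rightarrow> bool" where
  "lsc_fun f \<longleftrightarrow> (\<forall>x xs. xs \<longlonglongrightarrow> x \<longrightarrow> f x \<le> liminf (\<lambda>k. f (xs k)))"

definition bounded_below_fun :: "('a \<Rightarrow> ereal) \<Rightarrow> bool" where
  "bounded_below_fun f \<longleftrightarrow> (\<exists>c::real. \<forall>x. ereal c \<le> f x)"

definition hprox :: "('a::real_normed_vector \<Rightarrow> ereal) \<Rightarrow> real \<Rightarrow> real \<Rightarrow> 'a \<Rightarrow> 'a set" where
  "hprox f p \<gamma> x = {y. \<forall>z. f y + ereal (norm (x - y) powr p / (p * \<gamma>))
                          \<le> f z + ereal (norm (x - z) powr p / (p * \<gamma>))}"

definition henv :: "('a::real_normed_vector \<Rightarrow> ereal) \<Rightarrow> real \<Rightarrow> real \<Rightarrow> 'a \<Rightarrow> ereal" where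
  "henv f p \<gamma> x = (INF y. f y + ereal (norm (x - y) powr p / (p * \<gamma>)))"

definition frechet_subdiff :: "('a::real_inner \<Rightarrow> ereal) \<Rightarrow> 'a \<Rightarrow> 'a set" where
  "frechet_subdiff f x = {v. \<bar>f x\<bar> \<noteq> \<infinity> \<and>
     (\<forall>e>0. \<exists>r>0. \<forall>y. norm (y - x) < r \<longrightarrow>
        f x + ereal (inner v (y - x) - e * norm (y - x)) \<le> f y)}"

definition limiting_subdiff :: "('a::real_inner \<Rightarrow> ereal) \<Rightarrow> 'a \<Rightarrow> 'a set" where
  "limiting_subdiff f x = {v. \<exists>xs vs. xs \<longlonglongrightarrow> x \<and> (\<lambda>k. f (xs k)) \<longlonglongrightarrow> f x \<and>
     (\<forall>k. vs k \<in> frechet_subdiff f (xs k)) \<and> vs \<longlonglongrightarrow> v}"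

definition dom_subdiff :: "('a::real_inner \<Rightarrow> ereal) \<Rightarrow> 'a set" where
  "dom_subdiff f = {x. limiting_subdiff f x \<noteq> {}}"

text \<open>KL property with exponent theta at xbar, desingularizing function phi(t) = c t^(1-theta),
  so phi'(t) = c (1-theta) t^(-theta).\<close>

definition KL_exponent_at :: "('a::real_inner \<Rightarrow> ereal) \<Rightarrow> real \<Rightarrow> 'a \<Rightarrow> bool" where
  "KL_exponent_at h \<theta> xbar \<longleftrightarrow> xbar \<in> dom_subdiff h \<and>
     (\<exists>r>0. \<exists>\<eta>::ereal. \<eta> > 0 \<and> (\<exists>c>0. \<forall>x \<in> cball xbar r \<inter> dom_subdiff h.
        0 < \<bar>h x - h xbar\<bar> \<and> \<bar>h x - h xbar\<bar> < \<eta> \<longrightarrow>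
        c * (1 - \<theta>) * (real_of_ereal \<bar>h x - h xbar\<bar>) powr (- \<theta>)
          * infdist 0 (limiting_subdiff h x) \<ge> 1))"

definition cluster_points :: "(nat \<Rightarrow> 'a::topological_space) \<Rightarrow> 'a set" where
  "cluster_points x = {z. \<exists>r. strict_mono r \<and> (x \<circ> r) \<longlonglongrightarrow> z}"

definition env_eps :: "('a::real_normed_vector \<Rightarrow> ereal) \<Rightarrow> real \<Rightarrow> real \<Rightarrow> (nat \<Rightarrow> 'a \<Rightarrow> 'a) \<Rightarrow> nat \<Rightarrow> 'a \<Rightarrow> ereal" where
  "env_eps f p \<gamma> P j x = f (P j x) + ereal (norm (x - P j x) powr p / (p * \<gamma>))"

end

theory Submission
  imports Defs
begin

lemma grad_bound:
  fixes u0 :: "'a::real_inner"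
  assumes p: "p > 1" and g: "\<gamma> > 0"
  shows "\<exists>v. norm v = norm u0 powr (p - 1) / \<gamma> \<and>
    (\<forall>e>0. \<exists>d>0. \<forall>h. norm h < d \<longrightarrow>
       norm (u0 - h) powr p / (p * \<gamma>) - norm u0 powr p / (p * \<gamma>) \<le> - inner v h + e * norm h)"
proof (cases "u0 = 0")
  case True
  show ?thesis
  proof (rule exI[of _ 0], intro conjI allI impI)
    show "norm (0::'a) = norm u0 powr (p - 1) / \<gamma>" using True p by simp
    fix e :: real assume e: "e > 0"
    define d where "d = (e * p * \<gamma>) powr (1 / (p - 1))"
    have d: "d > 0" using e p g by (simp add: d_def)
    show "\<exists>d>0. \<forall>h. norm h < d \<longrightarrow>
       norm (u0 - h) powr p / (p * \<gamma>) - norm u0 powr p / (p * \<gamma>) \<le> - inner 0 h + e * norm h"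
    proof (intro exI[of _ d] conjI allI impI d)
      fix h :: 'a assume h: "norm h < d"
      show "norm (u0 - h) powr p / (p * \<gamma>) - norm u0 powr p / (p * \<gamma>) \<le> - inner 0 h + e * norm h"
      proof (cases "h = 0")
        case True then show ?thesis using \<open>u0 = 0\<close> by simp
      next
        case False
        have nh: "norm h > 0" using False by simp
        have "norm h powr (p - 1) \<le> d powr (p - 1)"
          using h p by (intro powr_mono2) auto
        also have "\<dots> = e * p * \<gamma>" using e p g
          by (simp add: d_def powr_powr)
        finally have *: "norm h powr (p - 1) \<le> e * p * \<gamma>" .
        have "norm h powr p = norm h * norm h powr (p - 1)"
          using nh by (simp add: powr_diff powr_one_gt_zero_iff)
        also have "\<dots> \<le> norm h * (e * p * \<gamma>)"
          using * nh by (intro mult_left_mono) auto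
        finally have "norm h powr p / (p * \<gamma>) \<le> e * norm h"
          using p g by (simp add: divide_simps mult_ac)
        then show ?thesis using \<open>u0 = 0\<close> by simp
      qed
    qed
  qed
next
  case False
  define G where "G = (\<lambda>u::'a. norm u powr p / (p * \<gamma>))"
  define v where "v = (norm u0 powr (p - 1) / \<gamma>) *\<^sub>R sgn u0"
  have n0: "norm u0 > 0" using False by simp
  have D1: "DERIV (\<lambda>t. t powr p / (p * \<gamma>)) (norm u0) :> (p * norm u0 powr (p - 1)) / (p * \<gamma>)"
    using has_real_derivative_powr[OF n0, of p] by (intro DERIV_cdivide) auto
  have GD: "GDERIV G u0 :> ((p * norm u0 powr (p - 1)) / (p * \<gamma>)) *\<^sub>R sgn u0"
    unfolding G_def using GDERIV_DERIV_compose[OF GDERIV_norm[OF False] D1] by simp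
  have vv: "((p * norm u0 powr (p - 1)) / (p * \<gamma>)) *\<^sub>R sgn u0 = v"
    unfolding v_def using p by simp
  have fd: "(G has_derivative (\<lambda>h. inner h v)) (at u0)"
    using GD unfolding vv gderiv_def .
  show ?thesis
  proof (rule exI[of _ v], intro conjI allI impI)
    show "norm v = norm u0 powr (p - 1) / \<gamma>"
      using False g by (simp add: v_def norm_sgn)
    fix e :: real assume e: "e > 0"
    from fd[unfolded has_derivative_at_alt] e obtain d where d: "d > 0"
      and dd: "\<And>y. norm (y - u0) < d \<Longrightarrow> norm (G y - G u0 - inner (y - u0) v) \<le> e * norm (y - u0)"
      by blast
    show "\<exists>d>0. \<forall>h. norm h < d \<longrightarrow>
       norm (u0 - h) powr p / (p * \<gamma>) - norm u0 powr p / (p * \<gamma>) \<le> - inner v h + e * norm h"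
    proof (intro exI[of _ d] conjI allI impI d)
      fix h :: 'a assume h: "norm h < d"
      have "norm (G (u0 - h) - G u0 - inner (u0 - h - u0) v) \<le> e * norm (u0 - h - u0)"
        using dd[of "u0 - h"] h by simp
      then show "norm (u0 - h) powr p / (p * \<gamma>) - norm u0 powr p / (p * \<gamma>) \<le> - inner v h + e * norm h"
        unfolding G_def by (simp add: inner_commute abs_le_iff)
    qed
  qed
qed

lemma prox_finite:
  assumes pr: "proper_fun \<phi>" and y: "y \<in> hprox \<phi> p \<gamma> x"
  shows "\<bar>\<phi> y\<bar> \<noteq> \<infinity>"
proof -
  obtain x0 where x0: "\<phi> x0 \<noteq> \<infinity>" using pr unfolding proper_fun_def by blast
  have "\<phi> y + ereal (norm (x - y) powr p / (p * \<gamma>)) \<le> \<phi> x0 + ereal (norm (x - x0) powr p / (p * \<gamma>))"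
    using y unfolding hprox_def by blast
  moreover have "\<phi> y \<noteq> - \<infinity>" using pr unfolding proper_fun_def by blast
  ultimately show ?thesis using x0 by (cases "\<phi> y"; cases "\<phi> x0") auto
qed

lemma prox_subgrad:
  assumes pr: "proper_fun \<phi>" and p: "p > 1" and g: "\<gamma> > 0"
    and y: "y \<in> hprox \<phi> p \<gamma> x"
  shows "\<exists>v. v \<in> limiting_subdiff \<phi> y \<and> norm v = norm (x - y) powr (p - 1) / \<gamma>"
proof -
  have fin: "\<bar>\<phi> y\<bar> \<noteq> \<infinity>" using prox_finite[OF pr y] .
  then obtain a where a: "\<phi> y = ereal a" by (cases "\<phi> y") auto
  obtain v where nv: "norm v = norm (x - y) powr (p - 1) / \<gamma>" and
    vb: "\<And>e. e > 0 \<Longrightarrow> \<exists>d>0. \<forall>h. norm h < d \<longrightarrow>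
       norm ((x - y) - h) powr p / (p * \<gamma>) - norm (x - y) powr p / (p * \<gamma>) \<le> - inner v h + e * norm h"
    using grad_bound[OF p g, of "x - y"] by blast
  have fr: "v \<in> frechet_subdiff \<phi> y"
    unfolding frechet_subdiff_def
  proof (intro CollectI conjI fin allI impI)
    fix e :: real assume e: "e > 0"
    obtain d where d: "d > 0" and dd: "\<And>h. norm h < d \<Longrightarrow>
       norm ((x - y) - h) powr p / (p * \<gamma>) - norm (x - y) powr p / (p * \<gamma>) \<le> - inner v h + e * norm h"
      using vb[OF e] by blast
    show "\<exists>r>0. \<forall>w. norm (w - y) < r \<longrightarrow> \<phi> y + ereal (inner v (w - y) - e * norm (w - y)) \<le> \<phi> w"
    proof (rule exI[of _ d], intro conjI allI impI d)
      fix w assume w: "norm (w - y) < d"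
      have hp: "\<phi> y + ereal (norm (x - y) powr p / (p * \<gamma>)) \<le> \<phi> w + ereal (norm (x - w) powr p / (p * \<gamma>))"
        using y unfolding hprox_def by blast
      have ee: "norm ((x - y) - (w - y)) powr p / (p * \<gamma>) - norm (x - y) powr p / (p * \<gamma>) \<le> - inner v (w - y) + e * norm (w - y)"
        using dd[OF w] .
      have xw: "(x - y) - (w - y) = x - w" by simp
      show "\<phi> y + ereal (inner v (w - y) - e * norm (w - y)) \<le> \<phi> w"
      proof (cases "\<phi> w")
        case (real b)
        then show ?thesis using hp ee a unfolding xw by simp
      next
        case PInf then show ?thesis by simp
      next
        case MInf then show ?thesis using pr unfolding proper_fun_def by blast
      qed
    qed
  qed
  have "v \<in> limiting_subdiff \<phi> y"
    unfolding limiting_subdiff_def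
    by (rule CollectI, rule exI[of _ "\<lambda>_. y"], rule exI[of _ "\<lambda>_. v"]) (use fr in auto)
  then show ?thesis using nv by blast
qed


lemma geom_conv:
  fixes y :: "nat \<Rightarrow> 'a::banach"
  assumes st: "\<forall>n. norm (y (Suc n) - y n) \<le> A * q^n" and q: "0 \<le> q" "q < 1"
  shows "\<exists>l. y \<longlonglongrightarrow> l \<and> (\<forall>n. norm (y n - l) \<le> A * q^n / (1 - q))"
proof -
  define f where "f n = y (Suc n) - y n" for n
  have sg: "summable (\<lambda>n. A * q^n)" using q by (intro summable_mult summable_geometric) auto
  have sf: "summable f"
    by (rule summable_comparison_test'[OF sg, of 0]) (use st in \<open>simp add: f_def\<close>)
  have snf: "summable (\<lambda>n. norm (f n))"
    by (rule summable_comparison_test'[OF sg, of 0]) (use st in \<open>simp add: f_def\<close>)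
  have yn: "y n = y 0 + sum f {..<n}" for n
    unfolding f_def by (induction n) auto
  define l where "l = y 0 + suminf f"
  have "(\<lambda>n. y 0 + sum f {..<n}) \<longlonglongrightarrow> l"
    unfolding l_def by (intro tendsto_add tendsto_const summable_LIMSEQ sf)
  moreover have "y = (\<lambda>n. y 0 + sum f {..<n})" using yn by blast
  ultimately have lim: "y \<longlonglongrightarrow> l" by simp
  have tail: "norm (y n - l) \<le> A * q^n / (1 - q)" for n
  proof -
    have "suminf f = (\<Sum>j. f (j + n)) + sum f {..<n}"
      using suminf_split_initial_segment[OF sf, of n] .
    then have "l - y n = (\<Sum>j. f (j + n))" unfolding l_def yn[of n] by (simp add: algebra_simps)
    then have "norm (y n - l) = norm (\<Sum>j. f (j + n))" by (simp add: norm_minus_commute)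
    also have "\<dots> \<le> (\<Sum>j. norm (f (j + n)))"
      by (rule summable_norm) (use summable_ignore_initial_segment[OF snf, of n] in simp)
    also have "\<dots> \<le> (\<Sum>j. A * q^n * q^j)"
    proof (rule suminf_le)
      fix j show "norm (f (j + n)) \<le> A * q ^ n * q ^ j"
        using st[rule_format, of "j + n"] f_def by (simp add: power_add mult_ac)
    next
      show "summable (\<lambda>j. norm (f (j + n)))" using summable_ignore_initial_segment[OF snf, of n] .
      show "summable (\<lambda>j. A * q ^ n * q ^ j)" using q by (intro summable_mult summable_geometric) auto
    qed
    also have "\<dots> = A * q^n / (1 - q)"
      using q by (simp add: suminf_mult suminf_geometric divide_simps)
    finally show ?thesis .
  qed
  show ?thesis using lim tail by blast
qed

lemma geom_extend:
  fixes f :: "nat \<Rightarrow> real"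
  assumes b: "\<forall>k\<ge>k0. f k \<le> C * q^k" and q: "q > 0"
  shows "\<exists>C'. C' \<ge> 0 \<and> (\<forall>k. f k \<le> C' * q^k)"
proof -
  define C' where "C' = \<bar>C\<bar> + (\<Sum>k<k0. \<bar>f k\<bar> / q^k)"
  have nn: "(\<Sum>k<k0. \<bar>f k\<bar> / q^k) \<ge> 0" using q by (intro sum_nonneg) auto
  have "f k \<le> C' * q^k" for k
  proof (cases "k < k0")
    case True
    have "\<bar>f k\<bar> / q^k \<le> (\<Sum>k<k0. \<bar>f k\<bar> / q^k)"
      using True q by (intro member_le_sum) auto
    then have "\<bar>f k\<bar> / q^k \<le> C'" unfolding C'_def by linarith
    then have "\<bar>f k\<bar> \<le> C' * q^k" using q by (simp add: divide_simps)
    then show ?thesis by linarith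
  next
    case False
    then have "f k \<le> C * q^k" using b by auto
    also have "\<dots> \<le> \<bar>C\<bar> * q^k" using q by (intro mult_right_mono) auto
    also have "\<dots> \<le> C' * q^k" using q nn unfolding C'_def by (intro mult_right_mono) auto
    finally show ?thesis .
  qed
  moreover have "C' \<ge> 0" using nn unfolding C'_def by simp
  ultimately show ?thesis by blast
qed


lemma KL_alg:
  fixes t s I c \<gamma> \<theta> p :: real
  assumes th: "0 < \<theta>" "\<theta> < 1" and pd: "p = 1 / (1 - \<theta>)"
    and t: "t \<ge> 0" and s: "s \<ge> 0" and c: "c > 0" and g: "\<gamma> > 0"
    and kl: "t > 0 \<Longrightarrow> 1 \<le> c * (1 - \<theta>) * t powr (- \<theta>) * I"
    and I: "I \<le> s powr (p - 1) / \<gamma>"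
  shows "t \<le> (c * (1 - \<theta>) / \<gamma>) powr (1 / \<theta>) * s powr p"
proof (cases "t = 0")
  case True then show ?thesis using c g th by simp
next
  case False
  then have tp: "t > 0" using t by simp
  define K where "K = c * (1 - \<theta>) / \<gamma>"
  have K: "K > 0" using c g th by (simp add: K_def)
  have cp: "c * (1 - \<theta>) > 0" using c th by simp
  have "1 \<le> c * (1 - \<theta>) * t powr (- \<theta>) * I" using kl tp by simp
  also have "\<dots> \<le> c * (1 - \<theta>) * t powr (- \<theta>) * (s powr (p - 1) / \<gamma>)"
    using I cp tp by (intro mult_left_mono) auto
  finally have 1: "1 \<le> c * (1 - \<theta>) * t powr (- \<theta>) * (s powr (p - 1) / \<gamma>)" .
  have "t powr \<theta> = t powr \<theta> * 1" by simp
  also have "\<dots> \<le> t powr \<theta> * (c * (1 - \<theta>) * t powr (- \<theta>) * (s powr (p - 1) / \<gamma>))"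
    using 1 tp by (intro mult_left_mono) auto
  also have "\<dots> = (t powr \<theta> * t powr (- \<theta>)) * (K * s powr (p - 1))"
    by (simp add: K_def field_simps)
  also have "t powr \<theta> * t powr (- \<theta>) = 1" using tp by (simp add: powr_add[symmetric])
  finally have 2: "t powr \<theta> \<le> K * s powr (p - 1)" by simp
  have "t = (t powr \<theta>) powr (1 / \<theta>)" using tp th by (simp add: powr_powr)
  also have "\<dots> \<le> (K * s powr (p - 1)) powr (1 / \<theta>)"
    using 2 th by (intro powr_mono2) auto
  also have "\<dots> = K powr (1 / \<theta>) * s powr ((p - 1) * (1 / \<theta>))"
    using K s by (simp add: powr_mult powr_powr)
  also have "(p - 1) * (1 / \<theta>) = p" using th pd by (simp add: field_simps)
  finally show ?thesis by (simp add: K_def)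
qed

lemma eps_le_powr:
  fixes e b p :: real
  assumes "e > 0" "e powr (1 / p) \<le> b" "p > 0"
  shows "e \<le> b powr p"
proof -
  have "e = (e powr (1 / p)) powr p" using assms by (simp add: powr_powr)
  also have "\<dots> \<le> b powr p" using assms by (intro powr_mono2) auto
  finally show ?thesis .
qed

lemma powr_pow_swap:
  fixes q a :: real
  assumes "q > 0"
  shows "(q ^ n) powr a = (q powr a) ^ n"
proof -
  have "(q ^ n) powr a = (q powr real n) powr a" using assms by (simp add: powr_realpow)
  also have "\<dots> = (q powr a) powr real n" by (simp add: powr_powr mult.commute)
  also have "\<dots> = (q powr a) ^ n" using assms by (simp add: powr_realpow)
  finally show ?thesis .
qed

theorem corollary2:
  fixes \<phi> :: "'a::euclidean_space \<Rightarrow> ereal"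
    and \<theta> p \<gamma> \<sigma> vt \<omega> D :: real
    and \<epsilon> \<delta> \<beta> :: "nat \<Rightarrow> real"
    and P :: "nat \<Rightarrow> 'a \<Rightarrow> 'a"
    and x xbar ybar d :: "nat \<Rightarrow> 'a"
  assumes phi: "proper_fun \<phi>" "lsc_fun \<phi>" "bounded_below_fun \<phi>"
    and theta: "0 < \<theta>" "\<theta> < 1" and p_def: "p = 1 / (1 - \<theta>)"
    and params: "\<gamma> > 0" "0 < \<sigma>" "\<sigma> < 1 / (p * \<gamma>)" "0 < vt" "vt < 1"
    and eps: "\<forall>k. \<epsilon> k > 0" "antimono \<epsilon>" "summable \<epsilon>"
    and del: "\<forall>k. \<delta> k > 0" "antimono \<delta>" "\<delta> \<longlonglongrightarrow> 0"
    and approx: "\<forall>j z. infdist (P j z) (hprox \<phi> p \<gamma> z) < \<delta> j \<and>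
                       env_eps \<phi> p \<gamma> P j z < henv \<phi> p \<gamma> z + ereal (\<epsilon> j)"
    and xbar_def: "\<forall>k. xbar k = P k (x k)"
    and linesearch: "\<forall>k. \<exists>m::nat.
        (let trial = (\<lambda>m::nat. (1 - vt ^ m) *\<^sub>R xbar k + vt ^ m *\<^sub>R (x k + d k));
             test = (\<lambda>m::nat. env_eps \<phi> p \<gamma> P (Suc k) (trial m)
                       \<le> env_eps \<phi> p \<gamma> P k (x k) - ereal (\<sigma> * norm (x k - xbar k) powr p)
                         + ereal (\<epsilon> k) + ereal (\<epsilon> (Suc k)))
         in test m \<and> (\<forall>m'<m. \<not> test m') \<and> x (Suc k) = trial m)"
    and ybar: "\<forall>k. ybar k \<in> hprox \<phi> p \<gamma> (x k) \<and>
                   norm (xbar k - ybar k) = infdist (xbar k) (hprox \<phi> p \<gamma> (x k))"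
    and KL: "\<forall>z\<in>cluster_points x. KL_exponent_at \<phi> \<theta> z"
    and bdd: "bounded (range x)"
    and dir: "D \<ge> 0" "\<forall>k. norm (d k) \<le> D * norm (x k - xbar k)"
    and omega: "0 < \<omega>" "\<omega> < 1"
    and beta: "\<forall>k. \<beta> k > 0" "antimono \<beta>" "summable \<beta>"
    and eps_bound: "\<forall>k. \<epsilon> k powr (1 / p) \<le> \<beta> k \<and>
                        \<epsilon> k powr (1 / p) \<le> \<omega> * norm (x k - xbar k) \<and>
                        (\<forall>i j. i \<le> j \<and> j \<le> k \<longrightarrow> \<epsilon> k powr (1 / p) \<le> \<beta> j * norm (x i - xbar i))"
    and del_bound: "\<forall>k. \<delta> k \<le> \<beta> k \<and>
                        \<delta> k \<le> \<omega> * norm (x k - xbar k) \<and>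
                        (\<forall>i j. i \<le> j \<and> j \<le> k \<longrightarrow> \<delta> k \<le> \<beta> j * norm (x i - xbar i))"
    and del_tail: "summable (\<lambda>k. \<Sum>j. \<delta> (j + k))"
    and eps_tail: "summable (\<lambda>k. \<Sum>j. \<epsilon> (j + k) powr (1 / p))"
  shows "\<exists>xhat. xhat \<in> hprox \<phi> p \<gamma> xhat \<and>
           (\<exists>C q. 0 < q \<and> q < 1 \<and>
              (\<forall>k. norm (x k - xhat) \<le> C * q ^ k) \<and>
              (\<forall>k. norm (xbar k - xhat) \<le> C * q ^ k) \<and>
              (\<forall>k. norm (ybar k - xhat) \<le> C * q ^ k))"
proof -
  have p1: "p > 1" unfolding p_def using theta by (simp add: field_simps)
  have p0: "p > 0" using p1 by simp
  define G where "G = (\<lambda>u::'a. norm u powr p / (p * \<gamma>))"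
  have G0: "G u \<ge> 0" for u using p0 params by (simp add: G_def)
  define rn where "rn k = norm (x k - xbar k)" for k
  define sn where "sn k = norm (x k - ybar k)" for k
  obtain c0 :: real where c0: "\<And>z. ereal c0 \<le> \<phi> z" using phi(3) unfolding bounded_below_fun_def by blast
  have notMInf: "\<phi> z \<noteq> - \<infinity>" for z using phi(1) unfolding proper_fun_def by blast
  have yprox: "ybar k \<in> hprox \<phi> p \<gamma> (x k)" for k using ybar by blast
  define fy where "fy k = real_of_ereal (\<phi> (ybar k))" for k
  have fy: "\<phi> (ybar k) = ereal (fy k)" for k
    using prox_finite[OF phi(1) yprox[of k]] unfolding fy_def by (cases "\<phi> (ybar k)") auto
  define h where "h k = fy k + G (x k - ybar k)" for k
  have henv_eq: "henv \<phi> p \<gamma> (x k) = ereal (h k)" for k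
  proof (rule antisym)
    show "henv \<phi> p \<gamma> (x k) \<le> ereal (h k)"
      unfolding henv_def h_def G_def using fy[of k] by (intro INF_lower2[of "ybar k"]) auto
    show "ereal (h k) \<le> henv \<phi> p \<gamma> (x k)"
      unfolding henv_def
    proof (rule INF_greatest)
      fix w :: 'a assume "w \<in> UNIV"
      show "ereal (h k) \<le> \<phi> w + ereal (norm (x k - w) powr p / (p * \<gamma>))"
        using yprox[of k] fy[of k] unfolding hprox_def h_def G_def by auto
    qed
  qed
  have env_xk: "env_eps \<phi> p \<gamma> P k (x k) = \<phi> (xbar k) + ereal (G (x k - xbar k))" for k
    unfolding env_eps_def G_def using xbar_def by simp
  have env_lt: "env_eps \<phi> p \<gamma> P k (x k) < ereal (h k + \<epsilon> k)" for k
    using approx[rule_format, of k "x k"] henv_eq[of k] by simp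
  define fxb where "fxb k = real_of_ereal (\<phi> (xbar k))" for k
  have fxb: "\<phi> (xbar k) = ereal (fxb k)" for k
  proof -
    have "\<phi> (xbar k) + ereal (G (x k - xbar k)) < ereal (h k + \<epsilon> k)" using env_lt[of k] env_xk[of k] by simp
    then have "\<phi> (xbar k) \<noteq> \<infinity>" by auto
    then show ?thesis using notMInf[of "xbar k"] unfolding fxb_def by (cases "\<phi> (xbar k)") auto
  qed
  define Phi where "Phi k = fxb k + G (x k - xbar k)" for k
  have env_Phi: "env_eps \<phi> p \<gamma> P k (x k) = ereal (Phi k)" for k
    using env_xk fxb Phi_def by simp
  have Phi_lt: "Phi k < h k + \<epsilon> k" for k using env_lt[of k] env_Phi[of k] by simp
  have h_le: "h k \<le> Phi k" for k
  proof -
    have "\<phi> (ybar k) + ereal (norm (x k - ybar k) powr p / (p * \<gamma>))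
          \<le> \<phi> (xbar k) + ereal (norm (x k - xbar k) powr p / (p * \<gamma>))"
      using yprox[of k] unfolding hprox_def by blast
    then show ?thesis using fy[of k] fxb[of k] unfolding h_def Phi_def G_def by simp
  qed
  have Phi_lb: "c0 \<le> Phi k" for k
  proof -
    have "c0 \<le> fxb k" using c0[of "xbar k"] fxb[of k] by simp
    then show ?thesis using G0[of "x k - xbar k"] unfolding Phi_def by simp
  qed
  have Grn: "G (x k - xbar k) = rn k powr p / (p * \<gamma>)" for k unfolding G_def rn_def by simp
  have Gsn: "G (x k - ybar k) = sn k powr p / (p * \<gamma>)" for k unfolding G_def sn_def by simp
  have desc_step: "Phi (Suc k) \<le> Phi k - \<sigma> * rn k powr p + \<epsilon> k + \<epsilon> (Suc k) \<and>
                   norm (x (Suc k) - x k) \<le> (1 + D) * rn k" for k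
  proof -
    obtain m where m: "env_eps \<phi> p \<gamma> P (Suc k) ((1 - vt ^ m) *\<^sub>R xbar k + vt ^ m *\<^sub>R (x k + d k))
                       \<le> env_eps \<phi> p \<gamma> P k (x k) - ereal (\<sigma> * norm (x k - xbar k) powr p)
                         + ereal (\<epsilon> k) + ereal (\<epsilon> (Suc k))"
      and xs: "x (Suc k) = (1 - vt ^ m) *\<^sub>R xbar k + vt ^ m *\<^sub>R (x k + d k)"
      using linesearch[rule_format, of k] unfolding Let_def by blast
    have "ereal (Phi (Suc k)) \<le> ereal (Phi k) - ereal (\<sigma> * rn k powr p) + ereal (\<epsilon> k) + ereal (\<epsilon> (Suc k))"
      using m env_Phi[of "Suc k"] env_Phi[of k] xs unfolding rn_def by simp
    then have 1: "Phi (Suc k) \<le> Phi k - \<sigma> * rn k powr p + \<epsilon> k + \<epsilon> (Suc k)" by simp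
    define t where "t = vt ^ m"
    have t: "0 < t" "t \<le> 1" using params unfolding t_def by (auto simp: power_le_one)
    have "x (Suc k) - x k = (1 - t) *\<^sub>R (xbar k - x k) + t *\<^sub>R d k"
      using xs unfolding t_def by (simp add: algebra_simps)
    then have "norm (x (Suc k) - x k) \<le> norm ((1 - t) *\<^sub>R (xbar k - x k)) + norm (t *\<^sub>R d k)"
      by (metis norm_triangle_ineq)
    also have "\<dots> = (1 - t) * rn k + t * norm (d k)"
      using t by (simp add: rn_def norm_minus_commute)
    also have "\<dots> \<le> 1 * rn k + 1 * (D * rn k)"
      using t dir(2)[rule_format, of k] unfolding rn_def
      by (intro add_mono mult_mono) auto
    finally have 2: "norm (x (Suc k) - x k) \<le> (1 + D) * rn k" by (simp add: algebra_simps)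
    show ?thesis using 1 2 by blast
  qed
  have rn0: "rn k \<ge> 0" for k unfolding rn_def by simp
  have sn0: "sn k \<ge> 0" for k unfolding sn_def by simp
  have rnp0: "rn k powr p \<ge> 0" for k by simp
  have del_lt: "norm (xbar k - ybar k) < \<delta> k" for k
  proof -
    have "norm (xbar k - ybar k) = infdist (xbar k) (hprox \<phi> p \<gamma> (x k))" using ybar by blast
    also have "\<dots> < \<delta> k" using approx[rule_format, of k "x k"] xbar_def by simp
    finally show ?thesis .
  qed
  have sn_le: "sn k \<le> 2 * rn k" for k
  proof -
    have "sn k \<le> norm (x k - xbar k) + norm (xbar k - ybar k)"
      unfolding sn_def using norm_triangle_ineq[of "x k - xbar k" "xbar k - ybar k"] by simp
    also have "\<dots> \<le> rn k + \<omega> * rn k"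
      using del_lt[of k] del_bound[rule_format, of k] unfolding rn_def by linarith
    also have "\<dots> \<le> 2 * rn k" using mult_left_le_one_le[OF rn0[of k], of \<omega>] omega by linarith
    finally show ?thesis .
  qed
  have ybxb: "norm (ybar k - xbar k) \<le> rn k" for k
  proof -
    have "norm (ybar k - xbar k) < \<delta> k" using del_lt[of k] by (simp add: norm_minus_commute)
    also have "\<delta> k \<le> \<omega> * rn k" using del_bound unfolding rn_def by blast
    also have "\<dots> \<le> rn k" using omega rn0[of k] by (intro mult_left_le_one_le) auto
    finally show ?thesis by simp
  qed
  have eps_rn: "\<epsilon> k \<le> rn k powr p" for k
  proof -
    have "\<epsilon> k powr (1 / p) \<le> \<omega> * rn k" using eps_bound unfolding rn_def by blast
    also have "\<dots> \<le> rn k" using omega rn0[of k] by (intro mult_left_le_one_le) auto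
    finally show ?thesis using eps_le_powr eps(1) p0 by blast
  qed
  have beta0: "\<beta> \<longlonglongrightarrow> 0" using summable_LIMSEQ_zero[OF beta(3)] .
  have s4: "(\<sigma> / 4) powr (1 / p) > 0" using params by simp
  obtain k1 where k1: "\<And>k. k \<ge> k1 \<Longrightarrow> \<beta> k < (\<sigma> / 4) powr (1 / p)"
  proof -
    have "\<forall>\<^sub>F k in sequentially. \<beta> k < (\<sigma> / 4) powr (1 / p)"
      using order_tendstoD(2)[OF beta0 s4] .
    then show ?thesis using that unfolding eventually_sequentially by blast
  qed
  have betap: "\<beta> k powr p \<le> \<sigma> / 4" if "k \<ge> k1" for k
  proof -
    have "\<beta> k powr p \<le> ((\<sigma> / 4) powr (1 / p)) powr p"
      using k1[OF that] beta(1) p0 by (intro powr_mono2) (auto simp: less_imp_le)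
    also have "\<dots> = \<sigma> / 4" using params p0 by (simp add: powr_powr)
    finally show ?thesis .
  qed
  have desc2: "Phi (Suc k) \<le> Phi k - \<sigma> / 2 * rn k powr p" if "k \<ge> k1" for k
  proof -
    have bk: "\<beta> k > 0" using beta(1) by blast
    have e1: "\<epsilon> k \<le> (\<beta> k * rn k) powr p"
      using eps_le_powr[OF eps(1)[rule_format, of k] _ p0] eps_bound unfolding rn_def by blast
    have "\<epsilon> (Suc k) powr (1 / p) \<le> \<beta> (Suc k) * rn k"
      using eps_bound[rule_format, of "Suc k"] unfolding rn_def by auto
    also have "\<dots> \<le> \<beta> k * rn k"
      using beta(2) rn0[of k] unfolding antimono_def by (intro mult_right_mono) auto
    finally have e2: "\<epsilon> (Suc k) \<le> (\<beta> k * rn k) powr p"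
      using eps_le_powr[OF eps(1)[rule_format, of "Suc k"] _ p0] by blast
    have "(\<beta> k * rn k) powr p = \<beta> k powr p * rn k powr p"
      using bk rn0[of k] by (simp add: powr_mult)
    also have "\<dots> \<le> \<sigma> / 4 * rn k powr p" using betap[OF that] by (intro mult_right_mono) auto
    finally have "(\<beta> k * rn k) powr p \<le> \<sigma> / 4 * rn k powr p" .
    then show ?thesis using desc_step[of k] e1 e2 by linarith
  qed
  have dec: "decseq (\<lambda>n. Phi (n + k1))"
  proof (rule decseq_SucI)
    fix n
    have "\<sigma> / 2 * rn (n + k1) powr p \<ge> 0" using params by simp
    then show "Phi (Suc n + k1) \<le> Phi (n + k1)" using desc2[of "n + k1"] by simp
  qed
  obtain L where L1: "(\<lambda>n. Phi (n + k1)) \<longlonglongrightarrow> L" and L2: "\<And>n. L \<le> Phi (n + k1)"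
    using decseq_convergent[OF dec, of c0] Phi_lb by blast
  have PhiL: "Phi \<longlonglongrightarrow> L" using LIMSEQ_offset[OF L1] .
  have LPhi: "L \<le> Phi k" if "k \<ge> k1" for k using L2[of "k - k1"] that by simp
  have rnp_le: "rn k powr p \<le> 2 / \<sigma> * (Phi k - L)" if "k \<ge> k1" for k
  proof -
    have "L \<le> Phi (Suc k)" using LPhi that by simp
    then show ?thesis using desc2[OF that] params by (simp add: field_simps)
  qed
  have rnp_lim: "(\<lambda>k. rn k powr p) \<longlonglongrightarrow> 0"
  proof (rule tendsto_sandwich[of "\<lambda>_. 0" _ _ "\<lambda>k. 2 / \<sigma> * (Phi k - L)"])
    show "\<forall>\<^sub>F n in sequentially. 0 \<le> rn n powr p" by simp
    show "\<forall>\<^sub>F n in sequentially. rn n powr p \<le> 2 / \<sigma> * (Phi n - L)"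
      using rnp_le unfolding eventually_sequentially by blast
    show "(\<lambda>k. 2 / \<sigma> * (Phi k - L)) \<longlonglongrightarrow> 0"
      using tendsto_mult[OF tendsto_const[of "2 / \<sigma>"] tendsto_diff[OF PhiL tendsto_const[of L]]] by simp
  qed simp
  have rn_lim: "rn \<longlonglongrightarrow> 0"
  proof -
    have "(\<lambda>k. (rn k powr p) powr (1 / p)) \<longlonglongrightarrow> 0"
      by (rule tendsto_zero_powrI[OF rnp_lim tendsto_const]) (use p0 in auto)
    moreover have "(rn k powr p) powr (1 / p) = rn k" for k using p0 rn0[of k] by (simp add: powr_powr)
    ultimately show ?thesis by simp
  qed
  have eps_lim: "\<epsilon> \<longlonglongrightarrow> 0" using summable_LIMSEQ_zero[OF eps(3)] .
  have h_lim: "h \<longlonglongrightarrow> L"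
  proof (rule tendsto_sandwich[of "\<lambda>k. Phi k - \<epsilon> k" _ _ Phi])
    show "\<forall>\<^sub>F n in sequentially. Phi n - \<epsilon> n \<le> h n" using Phi_lt by (simp add: less_imp_le algebra_simps)
    show "\<forall>\<^sub>F n in sequentially. h n \<le> Phi n" using h_le by simp
    show "(\<lambda>k. Phi k - \<epsilon> k) \<longlonglongrightarrow> L" using tendsto_diff[OF PhiL eps_lim] by simp
  qed (rule PhiL)
  have sn_lim: "sn \<longlonglongrightarrow> 0"
    by (rule tendsto_sandwich[of "\<lambda>_. 0" _ _ "\<lambda>k. 2 * rn k"]) (use sn0 sn_le tendsto_mult_right_zero[OF rn_lim, of 2] in auto)
  have Gs_lim: "(\<lambda>k. G (x k - ybar k)) \<longlonglongrightarrow> 0"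
  proof -
    have "(\<lambda>k. sn k powr p) \<longlonglongrightarrow> 0"
      by (rule tendsto_zero_powrI[OF sn_lim tendsto_const]) (use p0 sn0 in auto)
    then show ?thesis unfolding Gsn using tendsto_divide_zero by blast
  qed
  have fy_lim: "fy \<longlonglongrightarrow> L"
  proof -
    have "(\<lambda>k. h k - G (x k - ybar k)) \<longlonglongrightarrow> L - 0" by (intro tendsto_diff h_lim Gs_lim)
    then show ?thesis unfolding h_def by simp
  qed
  obtain z \<rho> where \<rho>: "strict_mono \<rho>" and xz: "(x \<circ> \<rho>) \<longlonglongrightarrow> z"
    using bounded_imp_convergent_subsequence[OF bdd] by blast
  have zcl: "z \<in> cluster_points x" unfolding cluster_points_def using \<rho> xz by blast
  have ybar_x: "(\<lambda>k. norm (ybar k - x k)) \<longlonglongrightarrow> 0"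
    using sn_lim unfolding sn_def by (simp add: norm_minus_commute)
  have yz: "(ybar \<circ> \<rho>) \<longlonglongrightarrow> z"
  proof -
    have "(\<lambda>k. ybar k - x k) \<longlonglongrightarrow> 0" using ybar_x tendsto_norm_zero_iff by blast
    then have "((\<lambda>k. ybar k - x k) \<circ> \<rho>) \<longlonglongrightarrow> 0" using LIMSEQ_subseq_LIMSEQ \<rho> by blast
    then have "(\<lambda>n. (ybar (\<rho> n) - x (\<rho> n)) + x (\<rho> n)) \<longlonglongrightarrow> 0 + z"
      using xz by (intro tendsto_add) (auto simp: o_def)
    then show ?thesis by (simp add: o_def)
  qed
  have fyr: "(\<lambda>k. \<phi> (ybar (\<rho> k))) \<longlonglongrightarrow> ereal L"
  proof -
    have "(fy \<circ> \<rho>) \<longlonglongrightarrow> L" using LIMSEQ_subseq_LIMSEQ[OF fy_lim \<rho>] .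
    then have "(\<lambda>k. ereal (fy (\<rho> k))) \<longlonglongrightarrow> ereal L" by (simp add: o_def)
    then show ?thesis using fy by simp
  qed
  have "\<phi> z \<le> liminf (\<lambda>k. \<phi> ((ybar \<circ> \<rho>) k))"
    using phi(2) yz unfolding lsc_fun_def by blast
  also have "liminf (\<lambda>k. \<phi> ((ybar \<circ> \<rho>) k)) = ereal L"
    using lim_imp_Liminf[OF _ fyr] by (simp add: o_def)
  finally have zle: "\<phi> z \<le> ereal L" .
  then obtain fz where fz: "\<phi> z = ereal fz" using notMInf[of z] by (cases "\<phi> z") auto
  have hz: "h k \<le> fz + G (x k - z)" for k
  proof -
    have "henv \<phi> p \<gamma> (x k) \<le> \<phi> z + ereal (G (x k - z))"
      unfolding henv_def G_def by (rule INF_lower2[of z]) auto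
    then show ?thesis using henv_eq[of k] fz by simp
  qed
  have Gz: "(\<lambda>k. G (x (\<rho> k) - z)) \<longlonglongrightarrow> 0"
  proof -
    have "(\<lambda>k. x (\<rho> k) - z) \<longlonglongrightarrow> 0" using xz tendsto_diff[OF xz tendsto_const[of z]] by (simp add: o_def)
    then have "(\<lambda>k. norm (x (\<rho> k) - z)) \<longlonglongrightarrow> 0" using tendsto_norm_zero by blast
    then have "(\<lambda>k. norm (x (\<rho> k) - z) powr p) \<longlonglongrightarrow> 0"
      by (rule tendsto_zero_powrI[OF _ tendsto_const]) (use p0 in auto)
    then show ?thesis unfolding G_def using tendsto_divide_zero by blast
  qed
  have "L \<le> fz"
  proof (rule LIMSEQ_le[of "h \<circ> \<rho>" L "\<lambda>k. fz + G (x (\<rho> k) - z)" fz])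
    show "(h \<circ> \<rho>) \<longlonglongrightarrow> L" using LIMSEQ_subseq_LIMSEQ[OF h_lim \<rho>] .
    show "(\<lambda>k. fz + G (x (\<rho> k) - z)) \<longlonglongrightarrow> fz" using tendsto_add[OF tendsto_const[of fz] Gz] by simp
    show "\<exists>N. \<forall>n\<ge>N. (h \<circ> \<rho>) n \<le> fz + G (x (\<rho> n) - z)" using hz by auto
  qed
  with zle fz have fzL: "fz = L" by simp
  have KLz: "KL_exponent_at \<phi> \<theta> z" using KL zcl by blast
  then obtain rad \<eta> c where rad: "rad > 0" and eta: "\<eta> > 0" and c: "c > 0"
    and klp: "\<And>w. w \<in> cball z rad \<inter> dom_subdiff \<phi> \<Longrightarrow> 0 < \<bar>\<phi> w - \<phi> z\<bar> \<and> \<bar>\<phi> w - \<phi> z\<bar> < \<eta> \<Longrightarrow>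
        c * (1 - \<theta>) * (real_of_ereal \<bar>\<phi> w - \<phi> z\<bar>) powr (- \<theta>) * infdist 0 (limiting_subdiff \<phi> w) \<ge> 1"
    unfolding KL_exponent_at_def by blast
  obtain \<eta>0 :: real where eta0: "\<eta>0 > 0" "ereal \<eta>0 \<le> \<eta>"
  proof (cases \<eta>)
    case (real r) then show ?thesis using that eta by auto
  next
    case PInf then show ?thesis using that[of 1] by auto
  next
    case MInf then show ?thesis using eta by auto
  qed
  define M where "M = (c * (1 - \<theta>) / \<gamma>) powr (1 / \<theta>)"
  have M0: "M \<ge> 0" unfolding M_def by simp
  have KLb: "\<bar>fy k - L\<bar> \<le> M * sn k powr p" if kr: "norm (ybar k - z) \<le> rad" and ke: "\<bar>fy k - L\<bar> < \<eta>0" for k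
  proof -
    obtain v where v: "v \<in> limiting_subdiff \<phi> (ybar k)" and nv: "norm v = norm (x k - ybar k) powr (p - 1) / \<gamma>"
      using prox_subgrad[OF phi(1) p1 params(1) yprox[of k]] by blast
    have dom: "ybar k \<in> cball z rad \<inter> dom_subdiff \<phi>"
      using v kr unfolding dom_subdiff_def by (auto simp: dist_norm norm_minus_commute)
    have I: "infdist 0 (limiting_subdiff \<phi> (ybar k)) \<le> sn k powr (p - 1) / \<gamma>"
      using infdist_le[OF v, of 0] nv unfolding sn_def by simp
    have absr: "\<bar>\<phi> (ybar k) - \<phi> z\<bar> = ereal \<bar>fy k - L\<bar>" using fy[of k] fz fzL by simp
    show ?thesis unfolding M_def
    proof (rule KL_alg[OF theta p_def _ sn0 c params(1) _ I])
      show "0 \<le> \<bar>fy k - L\<bar>" by simp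
      assume tp: "0 < \<bar>fy k - L\<bar>"
      have "0 < \<bar>\<phi> (ybar k) - \<phi> z\<bar> \<and> \<bar>\<phi> (ybar k) - \<phi> z\<bar> < \<eta>"
      proof -
        have "ereal \<bar>fy k - L\<bar> < ereal \<eta>0" using ke by simp
        then have "ereal \<bar>fy k - L\<bar> < \<eta>" using eta0(2) by (rule less_le_trans)
        then show ?thesis using absr tp by simp
      qed
      from klp[OF dom this] absr
      show "1 \<le> c * (1 - \<theta>) * \<bar>fy k - L\<bar> powr - \<theta> * infdist 0 (limiting_subdiff \<phi> (ybar k))" by simp
    qed
  qed
  define C3 where "C3 = (M + 1 / (p * \<gamma>)) * 2 powr p + 1 + \<sigma>"
  have pg: "p * \<gamma> > 0" using p0 params by simp
  have C3s: "C3 \<ge> \<sigma>" unfolding C3_def using M0 pg by (simp add: add_nonneg_nonneg)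
  have C3p: "C3 > 0" using C3s params by linarith
  have abound: "Phi k - L \<le> C3 * rn k powr p"
    if "k \<ge> k1" "norm (ybar k - z) \<le> rad" "\<bar>fy k - L\<bar> < \<eta>0" for k
  proof -
    have kb: "\<bar>fy k - L\<bar> \<le> M * sn k powr p" using KLb that(2,3) .
    have snp: "sn k powr p \<le> 2 powr p * rn k powr p"
    proof -
      have "sn k powr p \<le> (2 * rn k) powr p" using sn_le sn0 p0 by (intro powr_mono2) auto
      also have "\<dots> = 2 powr p * rn k powr p" using rn0 by (simp add: powr_mult)
      finally show ?thesis .
    qed
    have "Phi k - L \<le> (fy k - L) + sn k powr p / (p * \<gamma>) + \<epsilon> k"
      using Phi_lt[of k] unfolding h_def Gsn by simp
    also have "\<dots> \<le> M * sn k powr p + sn k powr p / (p * \<gamma>) + rn k powr p"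
      using kb eps_rn[of k] by linarith
    also have "\<dots> = (M + 1 / (p * \<gamma>)) * sn k powr p + rn k powr p" by (simp add: algebra_simps)
    also have "\<dots> \<le> (M + 1 / (p * \<gamma>)) * (2 powr p * rn k powr p) + rn k powr p"
      using snp M0 pg by (intro add_mono mult_left_mono) auto
    also have "\<dots> \<le> C3 * rn k powr p" unfolding C3_def using params
      by (simp add: algebra_simps)
    finally show ?thesis .
  qed
  define q0 where "q0 = 1 - \<sigma> / (2 * C3)"
  have q0b: "1 / 2 \<le> q0" "q0 < 1"
  proof -
    have "\<sigma> / (2 * C3) \<le> 1 / 2" using C3s C3p params by (simp add: divide_simps)
    then show "1 / 2 \<le> q0" unfolding q0_def by simp
    have "\<sigma> / (2 * C3) > 0" using C3p params by simp
    then show "q0 < 1" unfolding q0_def by simp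
  qed
  have contr: "Phi (Suc k) - L \<le> q0 * (Phi k - L)"
    if "k \<ge> k1" "norm (ybar k - z) \<le> rad" "\<bar>fy k - L\<bar> < \<eta>0" for k
  proof -
    have "(Phi k - L) / C3 \<le> rn k powr p" using abound[OF that] C3p by (simp add: divide_simps mult.commute)
    then have "\<sigma> / 2 * ((Phi k - L) / C3) \<le> \<sigma> / 2 * rn k powr p" using params by (intro mult_left_mono) auto
    then have "Phi (Suc k) - L \<le> (Phi k - L) - \<sigma> / 2 * ((Phi k - L) / C3)" using desc2[OF that(1)] by linarith
    also have "\<dots> = q0 * (Phi k - L)" unfolding q0_def using C3p by (simp add: field_simps)
    finally show ?thesis .
  qed
  define q where "q = q0 powr (1 / p)"
  have q: "0 < q" "q < 1"
  proof -
    show "0 < q" unfolding q_def using q0b by simp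
    have "q0 powr (1 / p) < 1 powr (1 / p)" using q0b p0 by (intro powr_less_mono2) auto
    then show "q < 1" unfolding q_def by simp
  qed
  define Kc where "Kc = (1 + D) / (1 - q)"
  have Kc0: "Kc \<ge> 0" unfolding Kc_def using dir(1) q by simp
  have ev: "\<forall>\<^sub>F k in sequentially. k \<ge> k1 \<and> \<bar>fy k - L\<bar> < \<eta>0 \<and> sn k < rad / 3 \<and>
              Kc * (2 / \<sigma> * (Phi k - L)) powr (1 / p) < rad / 3"
  proof (intro eventually_conj)
    show "\<forall>\<^sub>F k in sequentially. k \<ge> k1" by (rule eventually_ge_at_top)
    show "\<forall>\<^sub>F k in sequentially. \<bar>fy k - L\<bar> < \<eta>0"
      using tendstoD[OF fy_lim eta0(1)] by (simp add: dist_real_def)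
    show "\<forall>\<^sub>F k in sequentially. sn k < rad / 3"
      using order_tendstoD(2)[OF sn_lim, of "rad / 3"] rad by simp
    have "(\<lambda>k. 2 / \<sigma> * (Phi k - L)) \<longlonglongrightarrow> 0"
      using tendsto_mult[OF tendsto_const[of "2 / \<sigma>"] tendsto_diff[OF PhiL tendsto_const[of L]]] by simp
    then have "(\<lambda>k. (2 / \<sigma> * (Phi k - L)) powr (1 / p)) \<longlonglongrightarrow> 0"
    proof (rule tendsto_zero_powrI[OF _ tendsto_const])
      show "\<forall>\<^sub>F k in sequentially. 0 \<le> 2 / \<sigma> * (Phi k - L)"
        unfolding eventually_sequentially using LPhi params by (auto intro!: exI[of _ k1])
    qed (use p0 in simp)
    then have "(\<lambda>k. Kc * (2 / \<sigma> * (Phi k - L)) powr (1 / p)) \<longlonglongrightarrow> 0"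
      by (rule tendsto_mult_right_zero)
    then show "\<forall>\<^sub>F k in sequentially. Kc * (2 / \<sigma> * (Phi k - L)) powr (1 / p) < rad / 3"
      using order_tendstoD(2)[of _ 0 sequentially "rad / 3"] rad by simp
  qed
  then obtain N where N: "\<And>k. k \<ge> N \<Longrightarrow> k \<ge> k1 \<and> \<bar>fy k - L\<bar> < \<eta>0 \<and> sn k < rad / 3 \<and>
              Kc * (2 / \<sigma> * (Phi k - L)) powr (1 / p) < rad / 3"
    unfolding eventually_sequentially by blast
  obtain N2 where N2: "\<And>n. n \<ge> N2 \<Longrightarrow> norm (x (\<rho> n) - z) < rad / 3"
  proof -
    have "\<forall>\<^sub>F n in sequentially. dist ((x \<circ> \<rho>) n) z < rad / 3" using tendstoD[OF xz, of "rad / 3"] rad by simp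
    then show ?thesis using that unfolding eventually_sequentially by (auto simp: dist_norm)
  qed
  define k0 where "k0 = \<rho> (max N N2)"
  have k0N: "k0 \<ge> N" unfolding k0_def using seq_suble[OF \<rho>, of "max N N2"] by simp
  have k0z: "norm (x k0 - z) < rad / 3" unfolding k0_def using N2 by simp
  have Nk: "k \<ge> k1" "\<bar>fy k - L\<bar> < \<eta>0" "sn k < rad / 3" if "k \<ge> k0" for k
    using N[of k] that k0N by auto
  have a00: "Phi k0 - L \<ge> 0" using LPhi Nk(1)[of k0] by simp
  define B where "B = (2 / \<sigma> * (Phi k0 - L)) powr (1 / p)"
  have B0: "B \<ge> 0" unfolding B_def by simp
  have KcB: "Kc * B < rad / 3" using N[OF k0N] unfolding B_def by simp
  have rnB: "rn (k0 + n) \<le> B * q ^ n" if an: "Phi (k0 + n) - L \<le> q0 ^ n * (Phi k0 - L)" for n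
  proof -
    have "rn (k0 + n) powr p \<le> 2 / \<sigma> * (Phi (k0 + n) - L)" using rnp_le Nk(1)[of "k0 + n"] by simp
    also have "\<dots> \<le> 2 / \<sigma> * (q0 ^ n * (Phi k0 - L))" using an params by (intro mult_left_mono) auto
    also have "\<dots> = (2 / \<sigma> * (Phi k0 - L)) * q0 ^ n" by simp
    finally have 1: "rn (k0 + n) powr p \<le> (2 / \<sigma> * (Phi k0 - L)) * q0 ^ n" .
    have "rn (k0 + n) = (rn (k0 + n) powr p) powr (1 / p)" using p0 rn0 by (simp add: powr_powr)
    also have "\<dots> \<le> ((2 / \<sigma> * (Phi k0 - L)) * q0 ^ n) powr (1 / p)"
      using 1 p0 by (intro powr_mono2) auto
    also have "\<dots> = B * (q0 ^ n) powr (1 / p)"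
      unfolding B_def by (rule powr_mult)
    also have "(q0 ^ n) powr (1 / p) = q ^ n" unfolding q_def using powr_pow_swap q0b by simp
    finally show ?thesis .
  qed
  have ind: "Phi (k0 + n) - L \<le> q0 ^ n * (Phi k0 - L) \<and>
             norm (x (k0 + n) - x k0) \<le> (1 + D) * B * (\<Sum>j<n. q ^ j)" for n
  proof (induction n)
    case 0 then show ?case by simp
  next
    case (Suc n)
    let ?i = "k0 + n"
    have an: "Phi ?i - L \<le> q0 ^ n * (Phi k0 - L)" and xn: "norm (x ?i - x k0) \<le> (1 + D) * B * (\<Sum>j<n. q ^ j)"
      using Suc by auto
    have sg: "(\<Sum>j<n. q ^ j) \<le> 1 / (1 - q)"
      using q by (simp add: sum_gp_strict divide_simps)
    have "(1 + D) * B * (\<Sum>j<n. q ^ j) \<le> (1 + D) * B * (1 / (1 - q))"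
      using sg dir(1) B0 by (intro mult_left_mono) auto
    also have "\<dots> = Kc * B" unfolding Kc_def by simp
    finally have xi: "norm (x ?i - x k0) < rad / 3" using xn KcB by linarith
    have "norm (ybar ?i - z) \<le> norm (ybar ?i - x ?i) + norm (x ?i - x k0) + norm (x k0 - z)"
      using norm_triangle_ineq[of "ybar ?i - x ?i" "x ?i - x k0"]
        norm_triangle_ineq[of "ybar ?i - x ?i + (x ?i - x k0)" "x k0 - z"] by simp
    also have "norm (ybar ?i - x ?i) = sn ?i" unfolding sn_def by (simp add: norm_minus_commute)
    finally have yi: "norm (ybar ?i - z) \<le> rad" using Nk(3)[of ?i] xi k0z by simp
    have "Phi (Suc ?i) - L \<le> q0 * (Phi ?i - L)" using contr[OF Nk(1) yi Nk(2)] by simp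
    also have "\<dots> \<le> q0 * (q0 ^ n * (Phi k0 - L))" using an q0b by (intro mult_left_mono) auto
    finally have 1: "Phi (k0 + Suc n) - L \<le> q0 ^ Suc n * (Phi k0 - L)" by simp
    have "norm (x (Suc ?i) - x k0) \<le> norm (x ?i - x k0) + norm (x (Suc ?i) - x ?i)"
      using norm_triangle_ineq[of "x ?i - x k0" "x (Suc ?i) - x ?i"] by simp
    also have "\<dots> \<le> (1 + D) * B * (\<Sum>j<n. q ^ j) + (1 + D) * (B * q ^ n)"
      using xn desc_step[of ?i] rnB[OF an] dir(1) by (smt (verit) mult_left_mono)
    also have "\<dots> = (1 + D) * B * (\<Sum>j<Suc n. q ^ j)" by (simp add: algebra_simps)
    finally show ?case using 1 by simp
  qed
  have steps: "\<forall>n. norm (x (k0 + Suc n) - x (k0 + n)) \<le> ((1 + D) * B) * q ^ n"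
  proof
    fix n
    have "norm (x (Suc (k0 + n)) - x (k0 + n)) \<le> (1 + D) * rn (k0 + n)" using desc_step by blast
    also have "\<dots> \<le> (1 + D) * (B * q ^ n)" using rnB ind dir(1) by (intro mult_left_mono) auto
    finally show "norm (x (k0 + Suc n) - x (k0 + n)) \<le> ((1 + D) * B) * q ^ n" by simp
  qed
  obtain xhat where xl: "(\<lambda>n. x (k0 + n)) \<longlonglongrightarrow> xhat"
    and xhb: "\<And>n. norm (x (k0 + n) - xhat) \<le> (1 + D) * B * q ^ n / (1 - q)"
    using geom_conv[of "\<lambda>n. x (k0 + n)", OF steps] q by auto
  have xlim: "x \<longlonglongrightarrow> xhat" using LIMSEQ_offset[of x k0 xhat] xl by (simp add: add.commute)
  have ylim: "ybar \<longlonglongrightarrow> xhat"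
  proof -
    have "(\<lambda>k. ybar k - x k) \<longlonglongrightarrow> 0" using ybar_x tendsto_norm_zero_iff by blast
    then have "(\<lambda>k. (ybar k - x k) + x k) \<longlonglongrightarrow> 0 + xhat" using xlim by (intro tendsto_add)
    then show ?thesis by simp
  qed
  have "\<phi> xhat \<le> liminf (\<lambda>k. \<phi> (ybar k))" using phi(2) ylim unfolding lsc_fun_def by blast
  also have "liminf (\<lambda>k. \<phi> (ybar k)) = ereal L"
  proof (rule lim_imp_Liminf)
    show "(\<lambda>k. \<phi> (ybar k)) \<longlonglongrightarrow> ereal L" using fy fy_lim by simp
  qed simp
  finally have xhL: "\<phi> xhat \<le> ereal L" .
  have fixp: "xhat \<in> hprox \<phi> p \<gamma> xhat"
    unfolding hprox_def
  proof (intro CollectI allI)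
    fix w :: 'a
    have l0: "norm (xhat - xhat) powr p / (p * \<gamma>) = 0" using p0 by simp
    show "\<phi> xhat + ereal (norm (xhat - xhat) powr p / (p * \<gamma>)) \<le> \<phi> w + ereal (norm (xhat - w) powr p / (p * \<gamma>))"
    proof (cases "\<phi> w")
      case PInf then show ?thesis by simp
    next
      case MInf then show ?thesis using notMInf by blast
    next
      case (real b)
      have hw: "h k \<le> b + G (x k - w)" for k
      proof -
        have "henv \<phi> p \<gamma> (x k) \<le> \<phi> w + ereal (G (x k - w))"
          unfolding henv_def G_def by (rule INF_lower2[of w]) auto
        then show ?thesis using henv_eq[of k] real by simp
      qed
      have Gw: "(\<lambda>k. G (x k - w)) \<longlonglongrightarrow> G (xhat - w)"
        unfolding G_def
        by (intro tendsto_divide tendsto_const tendsto_powr' tendsto_norm tendsto_diff xlim) (use p0 pg in auto)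
      have "L \<le> b + G (xhat - w)"
        by (rule LIMSEQ_le[OF h_lim tendsto_add[OF tendsto_const Gw]]) (use hw in auto)
      then have "ereal L \<le> ereal (b + G (xhat - w))" by simp
      then have "\<phi> xhat \<le> ereal (b + G (xhat - w))" using xhL by (rule order_trans[rotated])
      then show ?thesis using l0 real unfolding G_def by simp
    qed
  qed
  define W where "W = B / q ^ k0"
  have qk0: "q ^ k0 > 0" using q(1) by simp
  have W0: "W \<ge> 0" unfolding W_def using B0 qk0 by (rule divide_nonneg_pos)
  have Bq: "B * q ^ n = W * q ^ (k0 + n)" for n
  proof -
    have "W * q ^ (k0 + n) = (B / q ^ k0 * q ^ k0) * q ^ n" unfolding W_def power_add by (simp only: mult.assoc)
    also have "B / q ^ k0 * q ^ k0 = B" using q(1) by simp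
    finally show ?thesis by (rule sym)
  qed
  define C0 where "C0 = (2 + (1 + D) / (1 - q)) * W"
  have rates: "norm (x k - xhat) \<le> C0 * q ^ k \<and> norm (xbar k - xhat) \<le> C0 * q ^ k \<and>
               norm (ybar k - xhat) \<le> C0 * q ^ k" if "k \<ge> k0" for k
  proof -
    obtain n where kn: "k = k0 + n" using le_Suc_ex[OF \<open>k \<ge> k0\<close>] by blast
    have qk: "B * q ^ n = W * q ^ k" unfolding kn by (rule Bq)
    have e1: "(1 + D) * B * q ^ n / (1 - q) = (1 + D) / (1 - q) * (B * q ^ n)" by simp
    have 1: "norm (x k - xhat) \<le> (1 + D) / (1 - q) * (W * q ^ k)"
      using xhb[of n] unfolding e1 qk kn .
    have 2: "rn k \<le> W * q ^ k" using rnB[of n] ind[of n] unfolding qk kn by blast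
    have 3: "norm (xbar k - xhat) \<le> rn k + norm (x k - xhat)"
    proof -
      have "norm (xbar k - xhat) \<le> norm (xbar k - x k) + norm (x k - xhat)"
        using norm_triangle_ineq[of "xbar k - x k" "x k - xhat"] by simp
      also have "norm (xbar k - x k) = rn k" unfolding rn_def by (rule norm_minus_commute)
      finally show ?thesis .
    qed
    have 4: "norm (ybar k - xhat) \<le> rn k + norm (xbar k - xhat)"
    proof -
      have "norm (ybar k - xhat) \<le> norm (ybar k - xbar k) + norm (xbar k - xhat)"
        using norm_triangle_ineq[of "ybar k - xbar k" "xbar k - xhat"] by simp
      then show ?thesis using ybxb[of k] by linarith
    qed
    have Wq: "W * q ^ k \<ge> 0" using W0 q by simp
    have Dq: "(1 + D) / (1 - q) \<ge> 0" using dir(1) q by simp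
    have "C0 * q ^ k = 2 * (W * q ^ k) + (1 + D) / (1 - q) * (W * q ^ k)"
      unfolding C0_def by (simp add: algebra_simps)
    then show ?thesis using 1 2 3 4 Wq Dq mult_nonneg_nonneg[OF Dq Wq] by linarith
  qed
  obtain Ca where Ca: "Ca \<ge> 0" "\<And>k. norm (x k - xhat) \<le> Ca * q ^ k"
    using geom_extend[of k0 "\<lambda>k. norm (x k - xhat)" C0 q] rates q(1) by auto
  obtain Cb where Cb: "Cb \<ge> 0" "\<And>k. norm (xbar k - xhat) \<le> Cb * q ^ k"
    using geom_extend[of k0 "\<lambda>k. norm (xbar k - xhat)" C0 q] rates q(1) by auto
  obtain Cc where Cc: "Cc \<ge> 0" "\<And>k. norm (ybar k - xhat) \<le> Cc * q ^ k"
    using geom_extend[of k0 "\<lambda>k. norm (ybar k - xhat)" C0 q] rates q(1) by auto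
  define C where "C = Ca + Cb + Cc"
  have le: "Ca * q ^ k \<le> C * q ^ k" "Cb * q ^ k \<le> C * q ^ k" "Cc * q ^ k \<le> C * q ^ k" for k
    unfolding C_def using Ca(1) Cb(1) Cc(1) q by (intro mult_right_mono; simp)+
  have A1: "\<forall>k. norm (x k - xhat) \<le> C * q ^ k" using Ca(2) le(1) order_trans by blast
  have A2: "\<forall>k. norm (xbar k - xhat) \<le> C * q ^ k" using Cb(2) le(2) order_trans by blast
  have A3: "\<forall>k. norm (ybar k - xhat) \<le> C * q ^ k" using Cc(2) le(3) order_trans by blast
  show ?thesis using fixp q A1 A2 A3 by blast
qed
end
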